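(* Suppose the pair $(A,B)$ satisfies the Kalman condition (K) with integer $d_*$, and that $F$ is smooth and globally Lipschitz. Suppose there is a sequence $(y^{(n)})_{n\in\mathbb{N}}$ in $\mathbb{R}^d$ bounded away from $0$ such that $$\lim_{n\to\infty}|y^{(n)}|^{k-1}\,\|D^kF(y^{(n)})\|=0\quad\text{for each }k=1,2,\dots,d_*-1.$$ Then there exists a point $x_0\in\mathbb{R}^d$ at which the weak Hörmander condition (H) holds.
   Context: $A:\mathbb{R}^d\to\mathbb{R}^d$, $B:\mathbb{R}^n\to\mathbb{R}^d$ linear, $n\le d$, $F:\mathbb{R}^d\to\mathbb{R}^d$; $D^kF(y)$ is the $k$th Fréchet derivative at $y$ (a $k$-linear map) with its operator norm. $e_1,\dots,e_n$ is the standard basis of $\mathbb{R}^n$. (K) the columns of $B, AB, A^2B,\dots$ span $\mathbb{R}^d$; $d_*$ denotes the smallest positive integer such that $\operatorname{span}\{A^jBe_i: 0\le j\le d_*-1,\ 1\le i\le n\}=\mathbb{R}^d$. (H) at $x_0$: the vector fields $V_0$, $\mathcal{L}_{V_2}V_1$, $\mathcal{L}_{V_3}\mathcal{L}_{V_2}V_1,\dots$ with $V_0\in\mathcal{B}$ and $V_1,V_2,\dots\in\mathcal{B}\cup\{A+F\}$ span $\mathbb{R}^d$ at $x_0$, where $\mathcal{B}=\{Be_1,\dots,Be_n\}$ (constant vector fields), $A+F$ is the vector field $x\mapsto Ax+F(x)$, and $\mathcal{L}_GH=DH[G]-DG[H]$. *)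

theory Defs
  imports "HOL-Analysis.Analysis"
begin

text \<open>k-th Frechet derivative of F at y, as a k-linear map acting on a list of
  k direction vectors: D^0 F y [] = F y, D^(k+1) F y (v # vs) = D(z. D^k F z vs)(y)[v].\<close>
fun kderiv :: "('a::real_normed_vector \<Rightarrow> 'b::real_normed_vector) \<Rightarrow> nat \<Rightarrow> 'a \<Rightarrow> 'a list \<Rightarrow> 'b" where
  "kderiv F 0 y vs = F y"
| "kderiv F (Suc k) y vs = frechet_derivative (\<lambda>z. kderiv F k z (tl vs)) (at y) (hd vs)"

definition kderiv_norm :: "('a::real_normed_vector \<Rightarrow> 'b::real_normed_vector) \<Rightarrow> nat \<Rightarrow> 'a \<Rightarrow> real" where
  "kderiv_norm F k y = Sup {norm (kderiv F k y vs) | vs. length vs = k \<and> (\<forall>v\<in>set vs. norm v \<le> 1)}"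

definition smooth :: "('a::real_normed_vector \<Rightarrow> 'b::real_normed_vector) \<Rightarrow> bool" where
  "smooth F \<longleftrightarrow> (\<forall>k vs y. length vs = k \<longrightarrow> (\<lambda>z. kderiv F k z vs) differentiable (at y))"

definition lie :: "('a::real_normed_vector \<Rightarrow> 'a) \<Rightarrow> ('a \<Rightarrow> 'a) \<Rightarrow> ('a \<Rightarrow> 'a)" where
  "lie G H = (\<lambda>x. frechet_derivative H (at x) (G x) - frechet_derivative G (at x) (H x))"

definition Bfields :: "('b::euclidean_space \<Rightarrow> 'a::euclidean_space) \<Rightarrow> ('a \<Rightarrow> 'a) set" where
  "Bfields B = {(\<lambda>x. B e) | e. e \<in> Basis}"

text \<open>Brackets L_{V_k} ... L_{V_2} V_1 with k >= 2 and V_i in S.\<close>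
inductive_set brackets :: "('a::real_normed_vector \<Rightarrow> 'a) set \<Rightarrow> ('a \<Rightarrow> 'a) set" for S where
  base: "V1 \<in> S \<Longrightarrow> V2 \<in> S \<Longrightarrow> lie V2 V1 \<in> brackets S"
| step: "W \<in> brackets S \<Longrightarrow> V \<in> S \<Longrightarrow> lie V W \<in> brackets S"

definition hoermander :: "('a::euclidean_space \<Rightarrow> 'a) \<Rightarrow> ('b::euclidean_space \<Rightarrow> 'a) \<Rightarrow> ('a \<Rightarrow> 'a) \<Rightarrow> 'a \<Rightarrow> bool" where
  "hoermander A B F x0 \<longleftrightarrow>
     span ((\<lambda>V. V x0) ` (Bfields B \<union> brackets (Bfields B \<union> {(\<lambda>x. A x + F x)}))) = UNIV"

definition kalman :: "('a::euclidean_space \<Rightarrow> 'a) \<Rightarrow> ('b::euclidean_space \<Rightarrow> 'a) \<Rightarrow> bool" where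
  "kalman A B \<longleftrightarrow> span {(A ^^ j) (B e) | j e. e \<in> Basis} = UNIV"

definition dstar :: "('a::euclidean_space \<Rightarrow> 'a) \<Rightarrow> ('b::euclidean_space \<Rightarrow> 'a) \<Rightarrow> nat" where
  "dstar A B = (LEAST m. 0 < m \<and> span {(A ^^ j) (B e) | j e. j < m \<and> e \<in> Basis} = UNIV)"

end

theory Submission
  imports Defs
begin



fun mlin :: "nat \<Rightarrow> ('a::real_normed_vector list \<Rightarrow> 'b::real_normed_vector) \<Rightarrow> bool" where
  "mlin 0 g = True"
| "mlin (Suc k) g = ((\<forall>vs. length vs = k \<longrightarrow> linear (\<lambda>v. g (v # vs))) \<and> (\<forall>v. mlin k (\<lambda>vs. g (v # vs))))"

lemma fd_add:
  assumes "f differentiable (at x)" "g differentiable (at x)"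
  shows "frechet_derivative (\<lambda>z. f z + g z) (at x) = (\<lambda>h. frechet_derivative f (at x) h + frechet_derivative g (at x) h)"
proof -
  have "((\<lambda>z. f z + g z) has_derivative (\<lambda>h. frechet_derivative f (at x) h + frechet_derivative g (at x) h)) (at x)"
    using assms by (intro has_derivative_add) (auto simp: frechet_derivative_works)
  then show ?thesis by (rule frechet_derivative_at[symmetric])
qed

lemma fd_scale:
  assumes "f differentiable (at x)"
  shows "frechet_derivative (\<lambda>z. c *\<^sub>R f z) (at x) = (\<lambda>h. c *\<^sub>R frechet_derivative f (at x) h)"
proof -
  have "((\<lambda>z. c *\<^sub>R f z) has_derivative (\<lambda>h. c *\<^sub>R frechet_derivative f (at x) h)) (at x)"
    using assms by (intro has_derivative_scaleR_right) (auto simp: frechet_derivative_works)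
  then show ?thesis by (rule frechet_derivative_at[symmetric])
qed

lemma mlin_fd:
  assumes "\<forall>z. mlin k (G z)" "\<forall>vs. length vs = k \<longrightarrow> (\<lambda>z. G z vs) differentiable (at x)"
  shows "mlin k (\<lambda>vs. frechet_derivative (\<lambda>z. G z vs) (at x) v)"
  using assms
proof (induction k arbitrary: G)
  case 0
  then show ?case by simp
next
  case (Suc k)
  have lin: "linear (\<lambda>w. frechet_derivative (\<lambda>z. G z (w # vs)) (at x) v)" if "length vs = k" for vs
  proof (rule linearI)
    fix w1 w2
    have l: "\<And>z. linear (\<lambda>w. G z (w # vs))" using Suc.prems(1) that by simp
    have "(\<lambda>z. G z ((w1 + w2) # vs)) = (\<lambda>z. G z (w1 # vs) + G z (w2 # vs))"
      by (rule ext) (simp add: linear_add[OF l])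
    moreover have "(\<lambda>z. G z (w1 # vs)) differentiable (at x)" "(\<lambda>z. G z (w2 # vs)) differentiable (at x)"
      using Suc.prems(2) that by auto
    ultimately show "frechet_derivative (\<lambda>z. G z ((w1 + w2) # vs)) (at x) v =
      frechet_derivative (\<lambda>z. G z (w1 # vs)) (at x) v + frechet_derivative (\<lambda>z. G z (w2 # vs)) (at x) v"
      by (simp add: fd_add)
  next
    fix c w
    have l: "\<And>z. linear (\<lambda>w. G z (w # vs))" using Suc.prems(1) that by simp
    have "(\<lambda>z. G z ((c *\<^sub>R w) # vs)) = (\<lambda>z. c *\<^sub>R G z (w # vs))"
      by (rule ext) (simp add: linear_scale[OF l])
    moreover have "(\<lambda>z. G z (w # vs)) differentiable (at x)"
      using Suc.prems(2) that by auto
    ultimately show "frechet_derivative (\<lambda>z. G z ((c *\<^sub>R w) # vs)) (at x) v =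
      c *\<^sub>R frechet_derivative (\<lambda>z. G z (w # vs)) (at x) v"
      by (simp add: fd_scale)
  qed
  have "mlin k (\<lambda>vs. frechet_derivative (\<lambda>z. G z (w # vs)) (at x) v)" for w
    using Suc.IH[of "\<lambda>z vs. G z (w # vs)"] Suc.prems by auto
  then show ?case using lin by simp
qed

lemma mlin_kderiv:
  assumes "smooth F"
  shows "mlin k (kderiv F k x)"
  using assms
proof (induction k arbitrary: x)
  case 0
  then show ?case by simp
next
  case (Suc k)
  have d: "\<forall>vs. length vs = k \<longrightarrow> (\<lambda>z. kderiv F k z vs) differentiable (at x)"
    using Suc.prems unfolding smooth_def by blast
  have "linear (\<lambda>v. kderiv F (Suc k) x (v # vs))" if "length vs = k" for vs
    using d that by (simp add: linear_frechet_derivative)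
  moreover have "mlin k (\<lambda>vs. kderiv F (Suc k) x (v # vs))" for v
    using mlin_fd[of k "\<lambda>z. kderiv F k z" x v] Suc d by simp
  ultimately show ?case by simp
qed

lemma linear_basis_expand:
  fixes T :: "'a::euclidean_space \<Rightarrow> 'b::real_vector"
  assumes "linear T"
  shows "T v = (\<Sum>b\<in>Basis. (v \<bullet> b) *\<^sub>R T b)"
proof -
  have "T v = T (\<Sum>b\<in>Basis. (v \<bullet> b) *\<^sub>R b)" by (simp add: euclidean_representation)
  also have "\<dots> = (\<Sum>b\<in>Basis. (v \<bullet> b) *\<^sub>R T b)"
    using assms by (simp add: linear_sum linear_scale)
  finally show ?thesis .
qed

lemma mlin_bound:
  fixes g :: "'a::euclidean_space list \<Rightarrow> 'b::real_normed_vector"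
  assumes "mlin k g"
  shows "\<exists>C. \<forall>vs. length vs = k \<longrightarrow> (\<forall>v\<in>set vs. norm v \<le> 1) \<longrightarrow> norm (g vs) \<le> C"
  using assms
proof (induction k arbitrary: g)
  case 0
  then show ?case by (intro exI[of _ "norm (g [])"]) auto
next
  case (Suc k)
  have "\<forall>b. \<exists>C. \<forall>vs. length vs = k \<longrightarrow> (\<forall>v\<in>set vs. norm v \<le> 1) \<longrightarrow> norm (g (b # vs)) \<le> C"
  proof
    fix b
    have "mlin k (\<lambda>vs. g (b # vs))" using Suc.prems by simp
    then show "\<exists>C. \<forall>vs. length vs = k \<longrightarrow> (\<forall>v\<in>set vs. norm v \<le> 1) \<longrightarrow> norm (g (b # vs)) \<le> C"
      by (rule Suc.IH)
  qed
  then have "\<exists>C. \<forall>b. \<forall>vs. length vs = k \<longrightarrow> (\<forall>v\<in>set vs. norm v \<le> 1) \<longrightarrow> norm (g (b # vs)) \<le> C b"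
    by (rule choice)
  then obtain C where C: "\<And>b vs. length vs = k \<Longrightarrow> (\<forall>v\<in>set vs. norm v \<le> 1) \<Longrightarrow> norm (g (b # vs)) \<le> C b"
    by blast
  show ?case
  proof (intro exI[of _ "\<Sum>b\<in>Basis. \<bar>C b\<bar>"] allI impI)
    fix ws :: "'a list" assume l: "length ws = Suc k" and n: "\<forall>v\<in>set ws. norm v \<le> 1"
    then obtain v vs where ws: "ws = v # vs" by (cases ws) auto
    have lv: "length vs = k" and nv: "norm v \<le> 1" and nvs: "\<forall>v\<in>set vs. norm v \<le> 1" using l n ws by auto
    have lin: "linear (\<lambda>v. g (v # vs))" using Suc.prems lv by simp
    then have "g (v # vs) = (\<Sum>b\<in>Basis. (v \<bullet> b) *\<^sub>R g (b # vs))"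
      using linear_basis_expand[OF lin, of v] by (simp only:)
    then have "norm (g (v # vs)) \<le> (\<Sum>b\<in>Basis. norm ((v \<bullet> b) *\<^sub>R g (b # vs)))"
      by (metis norm_sum)
    also have "\<dots> \<le> (\<Sum>b\<in>Basis. \<bar>C b\<bar>)"
    proof (rule sum_mono)
      fix b :: 'a assume b: "b \<in> Basis"
      have "\<bar>v \<bullet> b\<bar> \<le> 1"
        using Basis_le_norm[OF b, of v] nv by linarith
      moreover have "norm (g (b # vs)) \<le> \<bar>C b\<bar>" using C[OF lv nvs, of b] by linarith
      ultimately show "norm ((v \<bullet> b) *\<^sub>R g (b # vs)) \<le> \<bar>C b\<bar>"
        using mult_mono[of "\<bar>v \<bullet> b\<bar>" 1 "norm (g (b # vs))" "\<bar>C b\<bar>"] by simp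
    qed
    finally show "norm (g ws) \<le> (\<Sum>b\<in>Basis. \<bar>C b\<bar>)" using ws by simp
  qed
qed

lemma kderiv_le_norm:
  assumes "smooth F" "length vs = k" "\<forall>v\<in>set vs. norm v \<le> 1"
  shows "norm (kderiv F k x vs) \<le> kderiv_norm F k (x::'a::euclidean_space)"
proof -
  obtain C where C: "\<And>vs. length vs = k \<Longrightarrow> (\<forall>v\<in>set vs. norm v \<le> 1) \<Longrightarrow> norm (kderiv F k x vs) \<le> (C::real)"
    using mlin_bound[OF mlin_kderiv[OF assms(1)], of k x] by blast
  have "bdd_above {norm (kderiv F k x vs) | vs. length vs = k \<and> (\<forall>v\<in>set vs. norm v \<le> 1)}"
    using C by (auto intro!: bdd_aboveI[of _ C])
  then show ?thesis unfolding kderiv_norm_def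
    by (rule cSup_upper[rotated]) (use assms in auto)
qed




lemma Bseq_add2:
  fixes f g :: "nat \<Rightarrow> real"
  assumes "Bseq f" "Bseq g" shows "Bseq (\<lambda>n. f n + g n)"
proof -
  obtain K1 where K1: "\<forall>n. norm (f n) \<le> K1" using assms(1) by (auto elim: BseqE)
  obtain K2 where K2: "\<forall>n. norm (g n) \<le> K2" using assms(2) by (auto elim: BseqE)
  show ?thesis
  proof (rule BseqI')
    fix n show "norm (f n + g n) \<le> K1 + K2"
      using K1 K2 norm_triangle_ineq[of "f n" "g n"] by (metis add_mono order_trans)
  qed
qed

lemma Bseq_zero_mult:
  fixes f g :: "nat \<Rightarrow> real"
  assumes "Bseq f" "g \<longlonglongrightarrow> 0" shows "(\<lambda>n. g n * f n) \<longlonglongrightarrow> 0"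
proof -
  obtain K where K: "\<forall>n. norm (f n) \<le> K" using assms(1) by (auto elim: BseqE)
  have "(\<lambda>n. \<bar>g n\<bar> * K) \<longlonglongrightarrow> 0"
    using tendsto_mult_left_zero[OF tendsto_rabs_zero[OF assms(2)]] by simp
  then show ?thesis
    by (rule Lim_null_comparison[rotated])
       (use K in \<open>auto intro!: always_eventually mult_left_mono simp: abs_mult\<close>)
qed

locale hsetup =
  fixes A :: "'a::euclidean_space \<Rightarrow> 'a" and F :: "'a \<Rightarrow> 'a" and y :: "nat \<Rightarrow> 'a"
    and d :: nat and \<delta> L :: real
  assumes linA: "linear A" and sm: "smooth F" and lip: "L-lipschitz_on UNIV F"
    and dpos: "\<delta> > 0" and ybd: "\<forall>n. \<delta> \<le> norm (y n)"
    and hyp: "\<forall>k\<in>{1..<d}. (\<lambda>n. norm (y n) ^ (k - 1) * kderiv_norm F k (y n)) \<longlonglongrightarrow> 0"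
begin

inductive cls :: "nat \<Rightarrow> int \<Rightarrow> bool \<Rightarrow> ('a \<Rightarrow> real) \<Rightarrow> bool" where
  cst: "cls 0 0 False (\<lambda>x. c)"
| zero: "cls 0 w True (\<lambda>x. 0)"
| cV: "cls 0 1 False (\<lambda>x. (A x + F x) \<bullet> b)"
| cD: "1 \<le> k \<Longrightarrow> length bs = k \<Longrightarrow> \<forall>v\<in>set bs. norm v \<le> 1 \<Longrightarrow>
       cls k (1 - int k) True (\<lambda>x. kderiv F k x bs \<bullet> b)"
| mult: "cls m1 w1 s1 g1 \<Longrightarrow> cls m2 w2 s2 g2 \<Longrightarrow> cls (max m1 m2) (w1 + w2) (s1 \<or> s2) (\<lambda>x. g1 x * g2 x)"
| add: "cls m w s g1 \<Longrightarrow> cls m w s g2 \<Longrightarrow> cls m w s (\<lambda>x. g1 x + g2 x)"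
| weak: "cls m w s g \<Longrightarrow> m \<le> m' \<Longrightarrow> w \<le> w' \<Longrightarrow> (s' \<longrightarrow> s) \<Longrightarrow> cls m' w' s' g"

definition nz :: "('a \<Rightarrow> real) \<Rightarrow> int \<Rightarrow> nat \<Rightarrow> real" where
  "nz g w n = g (y n) / norm (y n) powr (real_of_int w)"

lemma ypos: "norm (y n) > 0" using ybd dpos by (metis less_le_trans)

lemma V_bound: "\<exists>K. \<forall>n. norm (A (y n) + F (y n)) \<le> K * norm (y n)"
proof -
  obtain KA where KA: "\<And>x. norm (A x) \<le> KA * norm x" using linear_bounded[OF linA] by blast
  have lF: "norm (F x) \<le> norm (F 0) + \<bar>L\<bar> * norm x" for x
  proof -
    have "dist (F x) (F 0) \<le> L * dist x 0" using lipschitz_onD[OF lip] by blast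
    then have "norm (F x - F 0) \<le> \<bar>L\<bar> * norm x" by (simp add: dist_norm) (smt (verit) abs_ge_self mult_right_mono norm_ge_zero)
    then show ?thesis using norm_triangle_ineq2[of "F x" "F 0"] by linarith
  qed
  show ?thesis
  proof (intro exI[of _ "KA + \<bar>L\<bar> + norm (F 0) / \<delta>"] allI)
    fix n
    have a: "norm (F 0) \<le> norm (F 0) / \<delta> * norm (y n)"
    proof -
      have "norm (F 0) / \<delta> * \<delta> \<le> norm (F 0) / \<delta> * norm (y n)"
        using ybd dpos by (intro mult_left_mono) auto
      then show ?thesis using dpos by simp
    qed
    have "norm (A (y n) + F (y n)) \<le> norm (A (y n)) + norm (F (y n))" by (rule norm_triangle_ineq)
    also have "\<dots> \<le> KA * norm (y n) + norm (F 0) / \<delta> * norm (y n) + \<bar>L\<bar> * norm (y n)"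
      using KA[of "y n"] lF[of "y n"] a by linarith
    finally show "norm (A (y n) + F (y n)) \<le> (KA + \<bar>L\<bar> + norm (F 0) / \<delta>) * norm (y n)"
      by (simp add: algebra_simps)
  qed
qed

lemma cls_bound:
  assumes "cls m w s g" "m < d"
  shows "Bseq (nz g w) \<and> (s \<longrightarrow> nz g w \<longlonglongrightarrow> 0)"
  using assms
proof (induction rule: cls.induct)
  case (cst c)
  have "nz (\<lambda>x. c) 0 = (\<lambda>n. c)" using ypos by (auto simp: nz_def)
  then show ?case by simp
next
  case (zero w)
  have "nz (\<lambda>x. 0) w = (\<lambda>n. 0)" by (auto simp: nz_def)
  then show ?case by simp
next
  case (cV b)
  obtain K where K: "\<And>n. norm (A (y n) + F (y n)) \<le> K * norm (y n)" using V_bound by blast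
  have "norm (nz (\<lambda>x. (A x + F x) \<bullet> b) 1 n) \<le> K * norm b" for n
  proof -
    have "\<bar>(A (y n) + F (y n)) \<bullet> b\<bar> \<le> K * norm (y n) * norm b"
      using Cauchy_Schwarz_ineq2[of "A (y n) + F (y n)" b] K[of n]
      by (meson mult_right_mono norm_ge_zero order_trans)
    then show ?thesis using ypos[of n] by (simp add: nz_def divide_le_eq mult_ac)
  qed
  then have "Bseq (nz (\<lambda>x. (A x + F x) \<bullet> b) 1)" by (rule BseqI')
  then show ?case by simp
next
  case (cD k bs b)
  have kd: "k \<in> {1..<d}" using cD by auto
  have conv: "(\<lambda>n. norm b * (norm (y n) ^ (k - 1) * kderiv_norm F k (y n))) \<longlonglongrightarrow> 0"
    using tendsto_mult_right_zero[OF hyp[rule_format, OF kd]] by simp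
  have "norm (nz (\<lambda>x. kderiv F k x bs \<bullet> b) (1 - int k) n) \<le> norm b * (norm (y n) ^ (k - 1) * kderiv_norm F k (y n))" for n
  proof -
    let ?r = "norm (y n)"
    have r: "?r > 0" by (rule ypos)
    have pw: "?r powr (real_of_int (1 - int k)) * ?r ^ (k - 1) = 1"
    proof -
      have "?r ^ (k - 1) = ?r powr (real (k - 1))" using r by (simp add: powr_realpow)
      moreover have "real_of_int (1 - int k) + real (k - 1) = 0" using cD by (simp add: of_nat_diff)
      ultimately show ?thesis using r by (simp add: powr_add[symmetric])
    qed
    have e: "nz (\<lambda>x. kderiv F k x bs \<bullet> b) (1 - int k) n = (kderiv F k (y n) bs \<bullet> b) * ?r ^ (k - 1)"
    proof -
      have "?r ^ (k - 1) > 0" using r by simp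
      then have "?r powr (real_of_int (1 - int k)) = 1 / ?r ^ (k - 1)"
        using pw by (simp add: eq_divide_eq)
      then show ?thesis unfolding nz_def by simp
    qed
    have "\<bar>kderiv F k (y n) bs \<bullet> b\<bar> \<le> norm (kderiv F k (y n) bs) * norm b"
      by (rule Cauchy_Schwarz_ineq2)
    also have "\<dots> \<le> kderiv_norm F k (y n) * norm b"
      using kderiv_le_norm[OF sm, of bs k "y n"] cD by (intro mult_right_mono) auto
    finally have "\<bar>kderiv F k (y n) bs \<bullet> b\<bar> * ?r ^ (k - 1) \<le> kderiv_norm F k (y n) * norm b * ?r ^ (k - 1)"
      using r by (intro mult_right_mono) auto
    then show ?thesis using r by (simp add: e abs_mult mult_ac)
  qed
  then have "nz (\<lambda>x. kderiv F k x bs \<bullet> b) (1 - int k) \<longlonglongrightarrow> 0"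
    by (intro Lim_null_comparison[OF always_eventually conv]) auto
  then show ?case by (auto intro: convergent_imp_Bseq convergentI)
next
  case (mult m1 w1 s1 g1 m2 w2 s2 g2)
  have e: "nz (\<lambda>x. g1 x * g2 x) (w1 + w2) = (\<lambda>n. nz g1 w1 n * nz g2 w2 n)"
    by (rule ext) (simp add: nz_def powr_add)
  have h1: "Bseq (nz g1 w1) \<and> (s1 \<longrightarrow> nz g1 w1 \<longlonglongrightarrow> 0)" using mult by auto
  have h2: "Bseq (nz g2 w2) \<and> (s2 \<longrightarrow> nz g2 w2 \<longlonglongrightarrow> 0)" using mult by auto
  have "s1 \<or> s2 \<longrightarrow> (\<lambda>n. nz g1 w1 n * nz g2 w2 n) \<longlonglongrightarrow> 0"
    using h1 h2 Bseq_zero_mult[of "nz g2 w2" "nz g1 w1"] Bseq_zero_mult[of "nz g1 w1" "nz g2 w2"]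
    by (auto simp: mult.commute)
  then show ?case using h1 h2 e by (auto intro: Bseq_mult)
next
  case (add m w s g1 g2)
  have e: "nz (\<lambda>x. g1 x + g2 x) w = (\<lambda>n. nz g1 w n + nz g2 w n)"
    by (rule ext) (simp add: nz_def add_divide_distrib)
  show ?case using add e by (auto intro: Bseq_add2 tendsto_add_zero)
next
  case (weak m w s g m' w' s')
  have h: "Bseq (nz g w) \<and> (s \<longrightarrow> nz g w \<longlonglongrightarrow> 0)" using weak by auto
  have e: "nz g w' = (\<lambda>n. nz g w n * norm (y n) powr (real_of_int (w - w')))"
    by (rule ext) (simp add: nz_def powr_diff ypos)
  have b: "Bseq (\<lambda>n. norm (y n) powr (real_of_int (w - w')))"
  proof (rule BseqI')
    fix n
    show "norm (norm (y n) powr (real_of_int (w - w'))) \<le> \<delta> powr (real_of_int (w - w'))"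
      using powr_mono2'[of "real_of_int (w - w')" \<delta> "norm (y n)"] weak ybd dpos by auto
  qed
  show ?case using h e b weak Bseq_zero_mult[OF b, of "nz g w"] by (auto intro: Bseq_mult)
qed

end



lemma kderiv1: "kderiv F (Suc 0) x [h] = frechet_derivative F (at x) h"
  by simp

context hsetup begin

abbreviation V where "V \<equiv> (\<lambda>x. A x + F x)"

lemma Fdiff: "F differentiable (at x)"
  using sm[unfolded smooth_def, rule_format, of "[]" 0 x] by simp

lemma linFD: "linear (frechet_derivative F (at x))"
  using Fdiff by (rule linear_frechet_derivative)

lemma cls_eq: "cls m w s g \<Longrightarrow> (\<And>x. g x = h x) \<Longrightarrow> cls m w s h"
proof -
  assume "cls m w s g" "\<And>x. g x = h x"
  moreover have "g = h" using \<open>\<And>x. g x = h x\<close> by (rule ext)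
  ultimately show ?thesis by simp
qed

lemma cls_w: "cls m w s g \<Longrightarrow> m \<le> m' \<Longrightarrow> cls m' w s g"
  by (rule weak) auto

lemma cls_scale: "cls m w s g \<Longrightarrow> cls m w s (\<lambda>x. c * g x)"
  using mult[OF cst[of c], of m w s g] by simp

lemma cls_diff: "cls m w s g1 \<Longrightarrow> cls m w s g2 \<Longrightarrow> cls m w s (\<lambda>x. g1 x - g2 x)"
  using add[of m w s g1 "\<lambda>x. (-1) * g2 x"] cls_scale[of m w s g2 "-1"] by simp

lemma cls_sum: "finite S \<Longrightarrow> (\<And>i. i \<in> S \<Longrightarrow> cls m w s (g i)) \<Longrightarrow> cls m w s (\<lambda>x. \<Sum>i\<in>S. g i x)"
proof (induction S rule: finite_induct)
  case empty
  show ?case using weak[OF zero[of w], of m w s] by simp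
next
  case (insert a S)
  then show ?case using add[of m w s "g a" "\<lambda>x. \<Sum>i\<in>S. g i x"] by simp
qed

lemma inner_lin_expand:
  assumes "linear T"
  shows "T v \<bullet> c = (\<Sum>b\<in>Basis. (v \<bullet> b) * (T b \<bullet> c))"
  using linear_basis_expand[OF assms, of v] by (simp add: inner_sum_left)

lemma cls_deriv:
  assumes "cls m w s g"
  shows "\<exists>g'. (\<forall>x. (g has_derivative g' x) (at x)) \<and> cls (Suc m) w s (\<lambda>x. g' x (V x))"
  using assms
proof (induction rule: cls.induct)
  case (cst c)
  show ?case
    by (intro exI[of _ "\<lambda>x h. 0"] conjI allI has_derivative_const)
       (rule weak[OF zero[of 0]], auto)
next
  case (zero w)
  show ?case
    by (intro exI[of _ "\<lambda>x h. 0"] conjI allI has_derivative_const)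
       (rule weak[OF cls.zero[of w]], auto)
next
  case (cV b)
  let ?T = "\<lambda>x h. A h + frechet_derivative F (at x) h"
  have lT: "linear (?T x)" for x
    using linA linFD by (intro linear_compose_add) auto
  have hd: "((\<lambda>x. (A x + F x) \<bullet> b) has_derivative (\<lambda>h. ?T x h \<bullet> b)) (at x)" for x
    by (intro has_derivative_inner_left has_derivative_add linear_imp_has_derivative linA)
       (use Fdiff in \<open>simp add: frechet_derivative_works\<close>)
  have eq: "?T x (V x) \<bullet> b = (\<Sum>b'\<in>Basis. (V x \<bullet> b') * ((A b' \<bullet> b) + kderiv F 1 x [b'] \<bullet> b))" for x
    using inner_lin_expand[OF lT[of x], of "V x" b] by (simp add: inner_add_left)
  have c1: "cls 1 0 False (\<lambda>x. (A b' \<bullet> b) + kderiv F 1 x [b'] \<bullet> b)" if "b' \<in> Basis" for b'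
  proof (rule add)
    show "cls 1 0 False (\<lambda>x. A b' \<bullet> b)" by (rule weak[OF cst]) auto
    have "cls 1 (1 - int 1) True (\<lambda>x. kderiv F 1 x [b'] \<bullet> b)"
      by (rule cD) (use that in auto)
    then show "cls 1 0 False (\<lambda>x. kderiv F 1 x [b'] \<bullet> b)" by (rule weak) auto
  qed
  have "cls 1 1 False (\<lambda>x. (V x \<bullet> b') * ((A b' \<bullet> b) + kderiv F 1 x [b'] \<bullet> b))" if "b' \<in> Basis" for b'
    using cls.mult[OF cls.cV[of b'] c1[OF that]] by simp
  then have "cls 1 1 False (\<lambda>x. \<Sum>b'\<in>Basis. (V x \<bullet> b') * ((A b' \<bullet> b) + kderiv F 1 x [b'] \<bullet> b))"
    by (intro cls_sum) auto
  then have "cls 1 1 False (\<lambda>x. ?T x (V x) \<bullet> b)"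
    by (rule cls_eq) (simp add: eq)
  then show ?case using hd unfolding One_nat_def by (intro exI[of _ "\<lambda>x h. ?T x h \<bullet> b"]) simp
next
  case (cD k bs b)
  let ?T = "\<lambda>x. frechet_derivative (\<lambda>z. kderiv F k z bs) (at x)"
  have dk: "(\<lambda>z. kderiv F k z bs) differentiable (at x)" for x
    using sm cD unfolding smooth_def by blast
  have lT: "linear (?T x)" for x using dk by (rule linear_frechet_derivative)
  have hd: "((\<lambda>x. kderiv F k x bs \<bullet> b) has_derivative (\<lambda>h. ?T x h \<bullet> b)) (at x)" for x
    by (intro has_derivative_inner_left) (use dk in \<open>simp add: frechet_derivative_works\<close>)
  have eq: "?T x (V x) \<bullet> b = (\<Sum>b'\<in>Basis. (V x \<bullet> b') * (kderiv F (Suc k) x (b' # bs) \<bullet> b))" for x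
    using inner_lin_expand[OF lT[of x], of "V x" b] by simp
  have "cls (Suc k) (1 - int k) True (\<lambda>x. (V x \<bullet> b') * (kderiv F (Suc k) x (b' # bs) \<bullet> b))"
    if "b' \<in> Basis" for b'
  proof -
    have "cls (Suc k) (1 - int (Suc k)) True (\<lambda>x. kderiv F (Suc k) x (b' # bs) \<bullet> b)"
      by (rule cls.cD) (use cD that in auto)
    from cls.mult[OF cls.cV[of b'] this] show ?thesis by (simp add: max_def)
  qed
  then have "cls (Suc k) (1 - int k) True (\<lambda>x. \<Sum>b'\<in>Basis. (V x \<bullet> b') * (kderiv F (Suc k) x (b' # bs) \<bullet> b))"
    by (intro cls_sum) auto
  then have "cls (Suc k) (1 - int k) True (\<lambda>x. ?T x (V x) \<bullet> b)"
    by (rule cls_eq) (simp add: eq)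
  then show ?case using hd by (intro exI[of _ "\<lambda>x h. ?T x h \<bullet> b"]) simp
next
  case (mult m1 w1 s1 g1 m2 w2 s2 g2)
  obtain d1 where d1: "\<forall>x. (g1 has_derivative d1 x) (at x)" "cls (Suc m1) w1 s1 (\<lambda>x. d1 x (V x))"
    using mult by blast
  obtain d2 where d2: "\<forall>x. (g2 has_derivative d2 x) (at x)" "cls (Suc m2) w2 s2 (\<lambda>x. d2 x (V x))"
    using mult by blast
  have hd: "((\<lambda>x. g1 x * g2 x) has_derivative (\<lambda>h. g1 x * d2 x h + d1 x h * g2 x)) (at x)" for x
    using d1(1) d2(1) by (intro has_derivative_mult) auto
  have "cls (Suc (max m1 m2)) (w1 + w2) (s1 \<or> s2) (\<lambda>x. g1 x * d2 x (V x) + d1 x (V x) * g2 x)"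
  proof (rule add)
    show "cls (Suc (max m1 m2)) (w1 + w2) (s1 \<or> s2) (\<lambda>x. g1 x * d2 x (V x))"
      by (rule cls_w[OF cls.mult[OF mult.hyps(1) d2(2)]]) auto
    show "cls (Suc (max m1 m2)) (w1 + w2) (s1 \<or> s2) (\<lambda>x. d1 x (V x) * g2 x)"
      by (rule cls_w[OF cls.mult[OF d1(2) mult.hyps(2)]]) auto
  qed
  then show ?case using hd by (intro exI[of _ "\<lambda>x h. g1 x * d2 x h + d1 x h * g2 x"]) simp
next
  case (add m w s g1 g2)
  obtain d1 where d1: "\<forall>x. (g1 has_derivative d1 x) (at x)" "cls (Suc m) w s (\<lambda>x. d1 x (V x))"
    using add by blast
  obtain d2 where d2: "\<forall>x. (g2 has_derivative d2 x) (at x)" "cls (Suc m) w s (\<lambda>x. d2 x (V x))"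
    using add by blast
  have hd: "((\<lambda>x. g1 x + g2 x) has_derivative (\<lambda>h. d1 x h + d2 x h)) (at x)" for x
    using d1(1) d2(1) by (intro has_derivative_add) auto
  show ?case using hd cls.add[OF d1(2) d2(2)] by (intro exI[of _ "\<lambda>x h. d1 x h + d2 x h"]) simp
next
  case (weak m w s g m' w' s')
  then obtain d1 where d1: "\<forall>x. (g has_derivative d1 x) (at x)" "cls (Suc m) w s (\<lambda>x. d1 x (V x))"
    by blast
  have "cls (Suc m') w' s' (\<lambda>x. d1 x (V x))" by (rule cls.weak[OF d1(2)]) (use weak in auto)
  then show ?case using d1 by blast
qed

end



context hsetup begin

definition vcls :: "nat \<Rightarrow> ('a \<Rightarrow> 'a) \<Rightarrow> bool" where
  "vcls m R \<longleftrightarrow> (\<forall>b\<in>Basis. cls m 0 True (\<lambda>x. R x \<bullet> b))"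

lemma step:
  assumes "vcls j R"
  shows "\<exists>R'. vcls (Suc j) R' \<and> lie V (\<lambda>x. c + R x) = (\<lambda>x. - A c + R' x)"
proof -
  have "\<forall>b\<in>Basis. \<exists>g'. (\<forall>x. ((\<lambda>x. R x \<bullet> b) has_derivative g' x) (at x)) \<and> cls (Suc j) 0 True (\<lambda>x. g' x (V x))"
    using assms cls_deriv unfolding vcls_def by blast
  from bchoice[OF this] obtain G where G0: "\<forall>b\<in>Basis. (\<forall>x. ((\<lambda>x. R x \<bullet> b) has_derivative G b x) (at x)) \<and> cls (Suc j) 0 True (\<lambda>x. G b x (V x))"
    by blast
  have G: "\<And>b x. b \<in> Basis \<Longrightarrow> ((\<lambda>x. R x \<bullet> b) has_derivative G b x) (at x)"
    "\<And>b. b \<in> Basis \<Longrightarrow> cls (Suc j) 0 True (\<lambda>x. G b x (V x))"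
    using G0 by auto
  have Weq: "(\<lambda>x. c + R x) = (\<lambda>x. c + (\<Sum>b\<in>Basis. (R x \<bullet> b) *\<^sub>R b))"
    by (simp add: euclidean_representation)
  have hW: "((\<lambda>x. c + R x) has_derivative (\<lambda>h. (\<Sum>b\<in>Basis. G b x h *\<^sub>R b))) (at x)" for x
  proof -
    have "((\<lambda>x. c + (\<Sum>b\<in>Basis. (R x \<bullet> b) *\<^sub>R b)) has_derivative (\<lambda>h. 0 + (\<Sum>b\<in>Basis. G b x h *\<^sub>R b))) (at x)"
      by (intro has_derivative_add has_derivative_const has_derivative_sum has_derivative_scaleR_left G)
    then show ?thesis unfolding Weq by simp
  qed
  have hV: "(V has_derivative (\<lambda>h. A h + frechet_derivative F (at x) h)) (at x)" for x
    by (intro has_derivative_add linear_imp_has_derivative linA)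
       (use Fdiff in \<open>simp add: frechet_derivative_works\<close>)
  define R' where "R' x = (\<Sum>b\<in>Basis. G b x (V x) *\<^sub>R b) - A (R x) - frechet_derivative F (at x) (c + R x)" for x
  have lie_eq: "lie V (\<lambda>x. c + R x) = (\<lambda>x. - A c + R' x)"
  proof (rule ext)
    fix x
    have "lie V (\<lambda>x. c + R x) x = (\<Sum>b\<in>Basis. G b x (V x) *\<^sub>R b) - (A (c + R x) + frechet_derivative F (at x) (c + R x))"
    proof -
      have fW: "frechet_derivative (\<lambda>x. c + R x) (at x) = (\<lambda>h. (\<Sum>b\<in>Basis. G b x h *\<^sub>R b))"
        using frechet_derivative_at[OF hW[of x]] by simp
      have fV: "frechet_derivative V (at x) = (\<lambda>h. A h + frechet_derivative F (at x) h)"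
        using frechet_derivative_at[OF hV[of x]] by simp
      show ?thesis unfolding lie_def fW fV by simp
    qed
    also have "\<dots> = - A c + R' x"
      unfolding R'_def using linear_add[OF linA, of c "R x"] by (simp add: algebra_simps)
    finally show "lie V (\<lambda>x. c + R x) x = - A c + R' x" .
  qed
  have "cls (Suc j) 0 True (\<lambda>x. R' x \<bullet> b0)" if b0: "b0 \<in> Basis" for b0
  proof -
    have e: "R' x \<bullet> b0 = G b0 x (V x) - (\<Sum>b\<in>Basis. (R x \<bullet> b) * (A b \<bullet> b0))
       - (\<Sum>b\<in>Basis. (c \<bullet> b + R x \<bullet> b) * (kderiv F 1 x [b] \<bullet> b0))" for x
      unfolding R'_def using inner_lin_expand[OF linA, of "R x" b0] inner_lin_expand[OF linFD[of x], of "c + R x" b0] b0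
      by (simp add: inner_diff_left inner_add_left)
    have t1: "cls (Suc j) 0 True (\<lambda>x. \<Sum>b\<in>Basis. (R x \<bullet> b) * (A b \<bullet> b0))"
    proof (rule cls_sum)
      fix b :: 'a assume b: "b \<in> Basis"
      have "cls j 0 True (\<lambda>x. R x \<bullet> b)" using assms b unfolding vcls_def by auto
      from cls.mult[OF this cls.cst[of "A b \<bullet> b0"]]
      show "cls (Suc j) 0 True (\<lambda>x. (R x \<bullet> b) * (A b \<bullet> b0))" by (rule cls.weak) auto
    qed auto
    have t2: "cls (Suc j) 0 True (\<lambda>x. \<Sum>b\<in>Basis. (c \<bullet> b + R x \<bullet> b) * (kderiv F 1 x [b] \<bullet> b0))"
    proof (rule cls_sum)
      fix b :: 'a assume b: "b \<in> Basis"
      have "cls j 0 True (\<lambda>x. R x \<bullet> b)" using assms b unfolding vcls_def by auto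
      then have r: "cls j 0 False (\<lambda>x. R x \<bullet> b)" by (rule cls.weak) auto
      have cc: "cls j 0 False (\<lambda>x. c \<bullet> b)" by (rule cls.weak[OF cls.cst]) auto
      have k1: "cls 1 (1 - int 1) True (\<lambda>x. kderiv F 1 x [b] \<bullet> b0)"
        by (rule cls.cD) (use b in auto)
      from cls.mult[OF cls.add[OF cc r] k1]
      show "cls (Suc j) 0 True (\<lambda>x. (c \<bullet> b + R x \<bullet> b) * (kderiv F 1 x [b] \<bullet> b0))"
        by (rule cls.weak) auto
    qed auto
    have "cls (Suc j) 0 True (\<lambda>x. G b0 x (V x) - (\<Sum>b\<in>Basis. (R x \<bullet> b) * (A b \<bullet> b0))
       - (\<Sum>b\<in>Basis. (c \<bullet> b + R x \<bullet> b) * (kderiv F 1 x [b] \<bullet> b0)))"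
      by (intro cls_diff G(2) b0 t1 t2)
    then show ?thesis by (rule cls_eq) (simp add: e)
  qed
  then show ?thesis using lie_eq unfolding vcls_def by blast
qed

lemma iter:
  "\<exists>R. vcls j R \<and> (lie V ^^ j) (\<lambda>x. c0) = (\<lambda>x. ((\<lambda>v. - A v) ^^ j) c0 + R x)"
proof (induction j)
  case 0
  have "vcls 0 (\<lambda>x. 0)" unfolding vcls_def using cls.zero[of 0] by simp
  then show ?case by (intro exI[of _ "\<lambda>x. 0"]) simp
next
  case (Suc j)
  then obtain R where R: "vcls j R" "(lie V ^^ j) (\<lambda>x. c0) = (\<lambda>x. ((\<lambda>v. - A v) ^^ j) c0 + R x)"
    by blast
  obtain R' where "vcls (Suc j) R'" "lie V (\<lambda>x. ((\<lambda>v. - A v) ^^ j) c0 + R x) = (\<lambda>x. - A (((\<lambda>v. - A v) ^^ j) c0) + R' x)"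
    using step[OF R(1)] by blast
  then show ?case using R(2) by (intro exI[of _ R']) simp
qed

lemma vcls_tendsto:
  assumes "vcls j R" "j < d"
  shows "(\<lambda>n. R (y n)) \<longlonglongrightarrow> 0"
proof -
  have cb: "(\<lambda>n. R (y n) \<bullet> b) \<longlonglongrightarrow> 0" if b: "b \<in> Basis" for b
  proof -
    have "cls j 0 True (\<lambda>x. R x \<bullet> b)" using assms b unfolding vcls_def by auto
    then have "nz (\<lambda>x. R x \<bullet> b) 0 \<longlonglongrightarrow> 0" using cls_bound assms(2) by blast
    moreover have "nz (\<lambda>x. R x \<bullet> b) 0 = (\<lambda>n. R (y n) \<bullet> b)"
      using ypos by (auto simp: nz_def)
    ultimately show ?thesis by simp
  qed
  have "(\<lambda>n. \<Sum>b\<in>Basis. (R (y n) \<bullet> b) *\<^sub>R b) \<longlonglongrightarrow> 0"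
  proof (intro tendsto_null_sum)
    fix b :: 'a assume bb: "b \<in> Basis"
    have "(\<lambda>n. (R (y n) \<bullet> b) *\<^sub>R b) \<longlonglongrightarrow> 0 *\<^sub>R b"
      by (intro tendsto_scaleR tendsto_const cb bb)
    then show "(\<lambda>n. (R (y n) \<bullet> b) *\<^sub>R b) \<longlonglongrightarrow> 0" by simp
  qed
  then show ?thesis by (simp add: euclidean_representation)
qed

end



lemma negpow: fixes A :: "'a::real_vector \<Rightarrow> 'a" shows "linear A \<Longrightarrow> ((\<lambda>v. - A v) ^^ j) c = ((-1) ^ j) *\<^sub>R (A ^^ j) c"
proof (induction j)
  case 0 then show ?case by simp
next
  case (Suc j)
  have "((\<lambda>v. - A v) ^^ Suc j) c = - A (((\<lambda>v. - A v) ^^ j) c)" by simp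
  also have "\<dots> = - A (((-1) ^ j) *\<^sub>R (A ^^ j) c)" using Suc by simp
  also have "\<dots> = ((-1) ^ Suc j) *\<^sub>R (A ^^ Suc j) c" using Suc(2) by (simp add: linear_scale)
  finally show ?case .
qed

lemma brackets_iter:
  assumes "W0 \<in> S" "V \<in> S"
  shows "(lie V ^^ Suc j) W0 \<in> brackets S"
proof (induction j)
  case 0
  then show ?case using assms by (simp add: brackets.base)
next
  case (Suc j)
  then show ?case using brackets.step[OF Suc assms(2)] by simp
qed

lemma dstar_prop:
  fixes A :: "'a::euclidean_space \<Rightarrow> 'a" and B :: "'b::euclidean_space \<Rightarrow> 'a"
  assumes "kalman A B"
  shows "0 < dstar A B \<and> span {(A ^^ j) (B e) | j e. j < dstar A B \<and> e \<in> Basis} = UNIV"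
proof -
  let ?G = "{(A ^^ j) (B e) | j e. e \<in> Basis}"
  obtain S where S: "S \<subseteq> ?G" "independent S" "?G \<subseteq> span S"
    using maximal_independent_subset by blast
  have fS: "finite S" using independent_bound[OF S(2)] by blast
  have "\<forall>s\<in>S. \<exists>j. \<exists>e. s = (A ^^ j) (B e) \<and> e \<in> Basis" using S(1) by blast
  from bchoice[OF this] obtain J where J: "\<forall>s\<in>S. \<exists>e. s = (A ^^ J s) (B e) \<and> e \<in> Basis" by blast
  define m where "m = Suc (Max (insert 0 (J ` S)))"
  have "S \<subseteq> {(A ^^ j) (B e) | j e. j < m \<and> e \<in> Basis}"
  proof
    fix s assume s: "s \<in> S"
    then obtain e where "s = (A ^^ J s) (B e)" "e \<in> Basis" using J by blast
    moreover have "J s < m" unfolding m_def using fS s by (simp add: le_imp_less_Suc)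
    ultimately show "s \<in> {(A ^^ j) (B e) | j e. j < m \<and> e \<in> Basis}" by blast
  qed
  then have "span S \<subseteq> span {(A ^^ j) (B e) | j e. j < m \<and> e \<in> Basis}" by (rule span_mono)
  moreover have "span ?G \<subseteq> span S" using S(3) by (simp add: span_minimal)
  moreover have "span ?G = UNIV" using assms unfolding kalman_def by simp
  ultimately have "span {(A ^^ j) (B e) | j e. j < m \<and> e \<in> Basis} = UNIV" by blast
  then have ex: "\<exists>m. 0 < m \<and> span {(A ^^ j) (B e) | j e. j < m \<and> e \<in> Basis} = UNIV"
    unfolding m_def by blast
  show ?thesis unfolding dstar_def by (rule LeastI_ex[OF ex])
qed

theorem mainTheorem12:
  fixes A :: "'a::euclidean_space \<Rightarrow> 'a" and B :: "'b::euclidean_space \<Rightarrow> 'a"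
    and F :: "'a \<Rightarrow> 'a" and y :: "nat \<Rightarrow> 'a"
  assumes "linear A" and "linear B" and "DIM('b) \<le> DIM('a)"
    and "kalman A B"
    and "smooth F" and "\<exists>L. L-lipschitz_on UNIV F"
    and "\<exists>\<delta>>0. \<forall>n. \<delta> \<le> norm (y n)"
    and "\<forall>k\<in>{1..<dstar A B}. (\<lambda>n. norm (y n) ^ (k - 1) * kderiv_norm F k (y n)) \<longlonglongrightarrow> 0"
  shows "\<exists>x0. hoermander A B F x0"
proof -
  obtain L where L: "L-lipschitz_on UNIV F" using assms(6) by blast
  obtain \<delta> where dl: "\<delta> > 0" "\<forall>n. \<delta> \<le> norm (y n)" using assms(7) by blast
  define d where "d = dstar A B"
  have "hsetup A F y d \<delta> L" unfolding hsetup_def using assms L dl d_def by auto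
  then interpret hsetup A F y d \<delta> L .
  have dP: "0 < d" "span {(A ^^ j) (B e) | j e. j < d \<and> e \<in> Basis} = UNIV"
    using dstar_prop[OF assms(4)] unfolding d_def by auto
  define W where "W e j = (lie V ^^ j) (\<lambda>x. B e)" for e j
  define c where "c e j = ((\<lambda>v. - A v) ^^ j) (B e)" for e j
  have conv: "(\<lambda>n. W e j (y n)) \<longlonglongrightarrow> c e j" if "j < d" for e j
  proof -
    obtain R where R: "vcls j R" "W e j = (\<lambda>x. c e j + R x)"
      using iter[of j "B e"] unfolding W_def c_def by blast
    have "(\<lambda>n. c e j + R (y n)) \<longlonglongrightarrow> c e j + 0"
      by (intro tendsto_add tendsto_const vcls_tendsto[OF R(1) that])
    then show ?thesis using R(2) by simp
  qed
  define Sn where "Sn n = {W e j (y n) | e j. e \<in> Basis \<and> j < d}" for n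
  have "\<exists>n. span (Sn n) = UNIV"
  proof (rule ccontr)
    assume "\<not> (\<exists>n. span (Sn n) = UNIV)"
    then have "\<forall>n. \<exists>u. norm u = 1 \<and> (\<forall>v\<in>Sn n. u \<bullet> v = 0)"
    proof (intro allI)
      fix n
      assume "\<not> (\<exists>n. span (Sn n) = UNIV)"
      then have "dim (Sn n) < DIM('a)"
        using dim_eq_full[of "Sn n"] dim_subset_UNIV[of "Sn n"] by auto
      then obtain x where x: "x \<noteq> 0" "\<And>v. v \<in> span (Sn n) \<Longrightarrow> orthogonal x v"
        using orthogonal_to_subspace_exists by blast
      have "norm (x /\<^sub>R norm x) = 1" using x(1) by simp
      moreover have "\<forall>v\<in>Sn n. (x /\<^sub>R norm x) \<bullet> v = 0"
        using x(2) span_base unfolding orthogonal_def by fastforce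
      ultimately show "\<exists>u. norm u = 1 \<and> (\<forall>v\<in>Sn n. u \<bullet> v = 0)" by blast
    qed
    from choice[OF this] obtain U where U0: "\<forall>n. norm (U n) = 1 \<and> (\<forall>v\<in>Sn n. U n \<bullet> v = 0)"
      by blast
    have U: "\<And>n. norm (U n) = 1" "\<And>n v. v \<in> Sn n \<Longrightarrow> U n \<bullet> v = 0"
      using U0 by auto
    have "\<forall>n. U n \<in> sphere 0 1" using U(1) by simp
    with compact_imp_seq_compact[OF compact_sphere[of "0::'a" 1]]
    obtain l r where lr: "l \<in> sphere 0 1" "strict_mono r" "(U \<circ> r) \<longlonglongrightarrow> l"
      by (rule seq_compactE)
    have orth: "l \<bullet> ((A ^^ j) (B e)) = 0" if "j < d" "e \<in> Basis" for j e
    proof -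
      have c1: "(\<lambda>n. W e j (y (r n))) \<longlonglongrightarrow> c e j"
        using LIMSEQ_subseq_LIMSEQ[OF conv[OF that(1)] lr(2)] by (simp add: o_def)
      have "(\<lambda>n. U (r n) \<bullet> W e j (y (r n))) \<longlonglongrightarrow> l \<bullet> c e j"
        using tendsto_inner[OF lr(3)[unfolded o_def] c1] .
      moreover have "(\<lambda>n. U (r n) \<bullet> W e j (y (r n))) = (\<lambda>n. 0)"
      proof (rule ext)
        fix n
        have "W e j (y (r n)) \<in> Sn (r n)" unfolding Sn_def using that by blast
        then show "U (r n) \<bullet> W e j (y (r n)) = 0" by (rule U(2))
      qed
      ultimately have "(\<lambda>n. 0) \<longlonglongrightarrow> l \<bullet> c e j" by simp
      then have "l \<bullet> c e j = 0" using LIMSEQ_unique[OF tendsto_const] by metis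
      then have "((-1) ^ j) * (l \<bullet> (A ^^ j) (B e)) = 0"
        unfolding c_def negpow[OF assms(1)] by simp
      then show ?thesis by simp
    qed
    have "orthogonal l l"
      by (rule orthogonal_to_span[of l "{(A ^^ j) (B e) | j e. j < d \<and> e \<in> Basis}"])
         (use dP(2) orth in \<open>auto simp: orthogonal_def\<close>)
    then have "l = 0" by (simp add: orthogonal_def)
    then show False using lr(1) by simp
  qed
  then obtain n where n: "span (Sn n) = UNIV" by blast
  let ?S = "Bfields B \<union> {(\<lambda>x. A x + F x)}"
  have "Sn n \<subseteq> (\<lambda>V. V (y n)) ` (Bfields B \<union> brackets ?S)"
  proof
    fix v assume "v \<in> Sn n"
    then obtain e j where ej: "v = W e j (y n)" "e \<in> Basis" by (auto simp: Sn_def)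
    have b: "(\<lambda>x. B e) \<in> ?S" using ej(2) unfolding Bfields_def by blast
    have "W e j \<in> Bfields B \<union> brackets ?S"
    proof (cases j)
      case 0
      have "(\<lambda>x. B e) \<in> Bfields B" using ej(2) unfolding Bfields_def by blast
      then show ?thesis using 0 by (simp add: W_def)
    next
      case (Suc i)
      then show ?thesis using brackets_iter[OF b, of "\<lambda>x. A x + F x" i] by (simp add: W_def)
    qed
    then show "v \<in> (\<lambda>V. V (y n)) ` (Bfields B \<union> brackets ?S)" using ej(1) by blast
  qed
  then have "span (Sn n) \<subseteq> span ((\<lambda>V. V (y n)) ` (Bfields B \<union> brackets ?S))" by (rule span_mono)
  then have "hoermander A B F (y n)" unfolding hoermander_def using n by auto
  then show ?thesis by blast
qed


end
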